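(* Let $\mathcal{X}\subseteq\mathbb{R}^n$ be compact. The following are equivalent: (i) $\mathcal{X}$ is standard comonotone; (ii) for all $v\in\mathbb{R}^n$ and all $i,j\in[n]$, there exists $x^*\in\arg\max\{v^\top x: x\in\mathcal{X}\}$ with $(v_i-v_j)(x^*_i-x^*_j)\ge0$; (iii) for all $v\in\mathbb{R}^n$, every $x^*\in\arg\max\{v^\top x: x\in\mathcal{X}\}$ and all $i,j\in[n]$ satisfy $(v_i-v_j)(x^*_i-x^*_j)\ge0$; (iv) for all $v\in\mathbb{R}^n$ and all $i,j\in[n]$ with $v_i=v_j$, there exist $\bar x,\tilde x\in\arg\max\{v^\top x: x\in\mathcal{X}\}$ with $\bar x_i\ge\bar x_j$ and $\tilde x_i\le\tilde x_j$.
   Context: $\Pi_n$ is the set of permutations of $[n]$; for $\pi\in\Pi_n$, $\mathcal{Z}(\pi)=\{x\in\mathbb{R}^n: x_{\pi(1)}\ge\cdots\ge x_{\pi(n)}\}$. A set $\mathcal{X}\subseteq\mathbb{R}^n$ is standard comonotone if for every $\pi\in\Pi_n$ and every $v\in\mathcal{Z}(\pi)$, whenever $\max_{x\in\mathcal{X}}v^\top x$ attains its optimum, it has an optimal solution in $\mathcal{Z}(\pi)$. *)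

theory Defs
  imports "HOL-Analysis.Analysis"
begin

text \<open>Vectors in R^n are modelled as real^'n; positions 1..n correspond to 0..<CARD('n).
  A permutation of [n] is a bijection from positions onto the index type.\<close>

definition is_perm :: "(nat \<Rightarrow> 'n::finite) \<Rightarrow> bool" where
  "is_perm \<pi> \<longleftrightarrow> bij_betw \<pi> {..<CARD('n)} (UNIV :: 'n set)"

definition Zcone :: "(nat \<Rightarrow> 'n::finite) \<Rightarrow> (real^'n) set" where
  "Zcone \<pi> = {x. \<forall>k l. k \<le> l \<and> l < CARD('n) \<longrightarrow> x $ (\<pi> l) \<le> x $ (\<pi> k)}"

definition argmax_lin :: "(real^'n) set \<Rightarrow> real^'n \<Rightarrow> (real^'n) set" where
  "argmax_lin X v = {x \<in> X. \<forall>y\<in>X. v \<bullet> y \<le> v \<bullet> x}"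

definition standard_comonotone :: "(real^'n::finite) set \<Rightarrow> bool" where
  "standard_comonotone X \<longleftrightarrow>
     (\<forall>\<pi> v. is_perm \<pi> \<and> v \<in> Zcone \<pi> \<and> argmax_lin X v \<noteq> {} \<longrightarrow>
        argmax_lin X v \<inter> Zcone \<pi> \<noteq> {})"

end

theory Submission
  imports Defs
begin

lemma argmax_nonempty:
  fixes X :: "(real^'n::finite) set"
  assumes "compact X" "X \<noteq> {}"
  shows "argmax_lin X v \<noteq> {}"
proof -
  have "continuous_on X (\<lambda>x. v \<bullet> x)" by (intro continuous_intros)
  then obtain x where "x \<in> X" "\<forall>y\<in>X. v \<bullet> y \<le> v \<bullet> x"
    using continuous_attains_sup[OF assms] by blast
  then show ?thesis unfolding argmax_lin_def by blast
qed

lemma shift_inner: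
  fixes v z :: "real^'n::finite"
  shows "(v - t *\<^sub>R (axis i 1 - axis j 1)) \<bullet> z = v \<bullet> z - t * (z$i - z$j)"
  by (simp add: inner_diff_left inner_axis' algebra_simps)

lemma shift_nth:
  fixes v :: "real^'n::finite"
  assumes "i \<noteq> j"
  shows "(v - t *\<^sub>R (axis i 1 - axis j 1))$i = v$i - t"
    "(v - t *\<^sub>R (axis i 1 - axis j 1))$j = v$j + t"
  using assms by (auto simp: axis_def)

lemma key_monot:
  fixes X :: "(real^'n::finite) set"
  assumes x: "x \<in> argmax_lin X v" and y: "y \<in> argmax_lin X (v - t *\<^sub>R (axis i 1 - axis j 1))"
    and t: "t > 0" and yij: "y$i \<ge> y$j"
  shows "x$i \<ge> x$j"
proof -
  have "v \<bullet> y \<le> v \<bullet> x" using x y unfolding argmax_lin_def by auto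
  moreover have "(v - t *\<^sub>R (axis i 1 - axis j 1)) \<bullet> x \<le> (v - t *\<^sub>R (axis i 1 - axis j 1)) \<bullet> y"
    using x y unfolding argmax_lin_def by auto
  ultimately have "t * (y$i - y$j) \<le> t * (x$i - x$j)" unfolding shift_inner by linarith
  then have "y$i - y$j \<le> x$i - x$j" using t by simp
  then show ?thesis using yij by linarith
qed

lemma perm_of_list:
  fixes v :: "real^'n::finite"
  assumes L: "set L = UNIV" "distinct L" and sorted: "sorted (map (\<lambda>a. - v$a) L)"
  shows "is_perm ((!) L) \<and> v \<in> Zcone ((!) L) \<and> length L = CARD('n)"
proof -
  have len: "length L = CARD('n)" using distinct_card[OF L(2)] L(1) by simp
  have perm: "is_perm ((!) L)" unfolding is_perm_def
    by (rule bij_betw_nth) (use L len in auto)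
  have "v \<in> Zcone ((!) L)" unfolding Zcone_def
  proof (clarify)
    fix k l assume kl: "k \<le> l" "l < CARD('n)"
    then have "map (\<lambda>a. - v$a) L ! k \<le> map (\<lambda>a. - v$a) L ! l"
      using sorted_nth_mono[OF sorted, of k l] len by simp
    then show "v $ (L!l) \<le> v $ (L!k)" using kl len by simp
  qed
  then show ?thesis using perm len by blast
qed

lemma sort_perm:
  fixes v :: "real^'n::finite"
  assumes "i \<noteq> j" "v$i \<ge> v$j"
  shows "\<exists>\<pi>. is_perm \<pi> \<and> v \<in> Zcone \<pi> \<and> (\<exists>p q. p < q \<and> q < CARD('n) \<and> \<pi> p = i \<and> \<pi> q = j)"
proof -
  obtain xs :: "'n list" where xs: "set xs = UNIV" "distinct xs"
    using finite_distinct_list[of "UNIV :: 'n set"] by auto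
  define key where "key = (\<lambda>a. - v$a)"
  define L where "L = sort_key key xs"
  have L: "set L = UNIV" "distinct L" using xs by (auto simp: L_def)
  have sorted: "sorted (map key L)" by (simp add: L_def)
  have len: "length L = CARD('n)" using distinct_card[OF L(2)] L(1) by simp
  obtain p where p: "p < CARD('n)" "L!p = i" using L(1) len by (metis UNIV_I in_set_conv_nth)
  obtain q where q: "q < CARD('n)" "L!q = j" using L(1) len by (metis UNIV_I in_set_conv_nth)
  have pq: "p \<noteq> q" using p q assms by auto
  show ?thesis
  proof (cases "p < q")
    case True
    then show ?thesis using perm_of_list[OF L sorted[unfolded key_def]] p q by blast
  next
    case False
    then have "q < p" using pq by simp
    then have "map key L ! q \<le> map key L ! p" using sorted_nth_mono[OF sorted, of q p] len p by simp
    then have eq: "v$i = v$j" using p q len assms unfolding key_def by simp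
    define L' where "L' = L[q := L!p, p := L!q]"
    have L': "set L' = UNIV" "distinct L'" using L p q len by (auto simp: L'_def)
    have "map key L' = map key L"
      unfolding L'_def using p q len eq by (intro nth_equalityI) (auto simp: key_def nth_list_update)
    then have sorted': "sorted (map key L')" using sorted by simp
    have "L'!q = i" "L'!p = j" using p q len pq by (auto simp: L'_def nth_list_update)
    then show ?thesis using perm_of_list[OF L' sorted'[unfolded key_def]] p \<open>q < p\<close> by blast
  qed
qed


lemma P3_imp_SC:
  fixes X :: "(real^'n::finite) set"
  assumes cX: "compact X" and ne: "X \<noteq> {}"
    and P3: "\<forall>v. \<forall>x\<in>argmax_lin X v. \<forall>i j. (v$i - v$j) * (x$i - x$j) \<ge> 0"
  shows "standard_comonotone X"
  unfolding standard_comonotone_def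
proof (intro allI impI)
  fix \<pi> :: "nat \<Rightarrow> 'n" and v
  assume a: "is_perm \<pi> \<and> v \<in> Zcone \<pi> \<and> argmax_lin X v \<noteq> {}"
  define N where "N = CARD('n)"
  have inj: "inj_on \<pi> {..<N}" using a unfolding is_perm_def bij_betw_def N_def by auto
  define \<rho> where "\<rho> = inv_into {..<N} \<pi>"
  define u :: "real^'n" where "u = (\<chi> a. - real (\<rho> a))"
  have u: "u $ \<pi> k = - real k" if "k < N" for k
    using inv_into_f_f[OF inj, of k] that by (simp add: u_def \<rho>_def)
  define w where "w = (\<lambda>m::nat. v + inverse (real (Suc m)) *\<^sub>R u)"
  have "\<forall>m. \<exists>x. x \<in> argmax_lin X (w m)" using argmax_nonempty[OF cX ne] by blast
  then obtain x where x: "\<And>m. x m \<in> argmax_lin X (w m)" by metis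
  have xZ: "x m $ \<pi> l \<le> x m $ \<pi> k" if kl: "k \<le> l" "l < N" for m k l
  proof (cases "k = l")
    case False
    then have klt: "k < l" using kl by simp
    have vkl: "v $ \<pi> l \<le> v $ \<pi> k" using a kl unfolding Zcone_def N_def by auto
    have pos0: "inverse (real (Suc m)) * real k < inverse (real (Suc m)) * real l"
      using klt by (intro mult_strict_left_mono) auto
    have wa: "w m $ a = v $ a + inverse (real (Suc m)) * u $ a" for a by (simp add: w_def)
    have pos: "0 < w m $ \<pi> k - w m $ \<pi> l"
      unfolding wa u[of k, OF less_trans[OF klt kl(2)]] u[of l, OF kl(2)] using vkl pos0 by linarith
    have "0 \<le> (w m $ \<pi> k - w m $ \<pi> l) * (x m $ \<pi> k - x m $ \<pi> l)"
      using P3 x[of m] by blast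
    then show ?thesis using pos by (simp add: zero_le_mult_iff)
  qed simp
  have "\<forall>m. x m \<in> X" using x unfolding argmax_lin_def by auto
  then obtain l r where l: "l \<in> X" and r: "strict_mono r" and lim: "(x \<circ> r) \<longlonglongrightarrow> l"
    using compact_imp_seq_compact[OF cX] unfolding seq_compact_def by blast
  have wlim: "w \<longlonglongrightarrow> v"
  proof -
    have "(\<lambda>m. v + inverse (real (Suc m)) *\<^sub>R u) \<longlonglongrightarrow> v + 0 *\<^sub>R u"
      by (intro tendsto_intros LIMSEQ_inverse_real_of_nat)
    then show ?thesis by (simp add: w_def)
  qed
  have wrlim: "(w \<circ> r) \<longlonglongrightarrow> v" using LIMSEQ_subseq_LIMSEQ[OF wlim r] .
  have "l \<in> Zcone \<pi>" unfolding Zcone_def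
  proof (clarify)
    fix k l' assume kl: "k \<le> l'" "l' < CARD('n)"
    have "(\<lambda>m. (x \<circ> r) m $ \<pi> l') \<longlonglongrightarrow> l $ \<pi> l'" by (intro tendsto_intros lim)
    moreover have "(\<lambda>m. (x \<circ> r) m $ \<pi> k) \<longlonglongrightarrow> l $ \<pi> k" by (intro tendsto_intros lim)
    ultimately show "l $ \<pi> l' \<le> l $ \<pi> k"
      using xZ kl unfolding N_def by (intro tendsto_le[OF trivial_limit_sequentially]) auto
  qed
  moreover have "l \<in> argmax_lin X v" unfolding argmax_lin_def
  proof (intro CollectI conjI ballI l)
    fix y assume y: "y \<in> X"
    have "(\<lambda>m. (w \<circ> r) m \<bullet> y) \<longlonglongrightarrow> v \<bullet> y" by (intro tendsto_intros wrlim)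
    moreover have "(\<lambda>m. (w \<circ> r) m \<bullet> (x \<circ> r) m) \<longlonglongrightarrow> v \<bullet> l" by (intro tendsto_intros wrlim lim)
    moreover have "\<forall>m. (w \<circ> r) m \<bullet> y \<le> (w \<circ> r) m \<bullet> (x \<circ> r) m"
      using x y unfolding argmax_lin_def by auto
    ultimately show "v \<bullet> y \<le> v \<bullet> l"
      by (intro tendsto_le[OF trivial_limit_sequentially]) auto
  qed
  ultimately show "argmax_lin X v \<inter> Zcone \<pi> \<noteq> {}" by blast
qed

lemma lin_cases:
  fixes v x :: "real^'n::finite"
  assumes "\<And>i j. v$i > v$j \<Longrightarrow> x$i \<ge> x$j"
  shows "(v$i - v$j) * (x$i - x$j) \<ge> 0"
proof -
  consider "v$i > v$j" | "v$i < v$j" | "v$i = v$j" by linarith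
  then show ?thesis
  proof cases
    case 1
    have "x$i \<ge> x$j" using assms 1 by blast
    then show ?thesis using 1 by (intro mult_nonneg_nonneg) auto
  next
    case 2 then have "x$j \<ge> x$i" using assms by blast
    then show ?thesis using 2 by (simp add: mult_nonpos_nonpos)
  qed simp
qed

theorem theorem2:
  fixes X :: "(real^'n::finite) set"
  assumes "compact X" and "X \<noteq> {}"
  shows "(standard_comonotone X
            \<longleftrightarrow> (\<forall>v i j. \<exists>x\<in>argmax_lin X v. (v$i - v$j) * (x$i - x$j) \<ge> 0))
       \<and> (standard_comonotone X
            \<longleftrightarrow> (\<forall>v. \<forall>x\<in>argmax_lin X v. \<forall>i j. (v$i - v$j) * (x$i - x$j) \<ge> 0))
       \<and> (standard_comonotone X
            \<longleftrightarrow> (\<forall>v i j. v$i = v$j \<longrightarrow>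
                   (\<exists>xb\<in>argmax_lin X v. \<exists>xt\<in>argmax_lin X v. xb$i \<ge> xb$j \<and> xt$i \<le> xt$j)))"
  (is "(?S \<longleftrightarrow> ?P2) \<and> (?S \<longleftrightarrow> ?P3) \<and> (?S \<longleftrightarrow> ?P4)")
proof -
  have half: "\<exists>x\<in>argmax_lin X v. x$i \<ge> x$j" if S: ?S and ij: "i \<noteq> j" "v$i \<ge> v$j" for v i j
  proof -
    obtain \<pi> p q where \<pi>: "is_perm \<pi>" "v \<in> Zcone \<pi>" "p < q" "q < CARD('n)" "\<pi> p = i" "\<pi> q = j"
      using sort_perm[OF ij] by blast
    then obtain x where "x \<in> argmax_lin X v" "x \<in> Zcone \<pi>"
      using S argmax_nonempty[OF assms] unfolding standard_comonotone_def by blast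
    moreover have "\<forall>k l. k \<le> l \<and> l < CARD('n) \<longrightarrow> x $ (\<pi> l) \<le> x $ (\<pi> k)"
      using \<open>x \<in> Zcone \<pi>\<close> by (simp add: Zcone_def)
    ultimately show ?thesis using \<pi> by (metis less_imp_le)
  qed
  have S4: ?P4 if S: ?S
  proof (intro allI impI)
    fix v :: "real^'n" and i j assume e: "v$i = v$j"
    show "\<exists>xb\<in>argmax_lin X v. \<exists>xt\<in>argmax_lin X v. xb$i \<ge> xb$j \<and> xt$i \<le> xt$j"
    proof (cases "i = j")
      case True then show ?thesis using argmax_nonempty[OF assms] by blast
    next
      case False
      obtain xb where "xb \<in> argmax_lin X v" "xb$i \<ge> xb$j" using half[OF S False, of v] e by auto
      moreover obtain xt where "xt \<in> argmax_lin X v" "xt$j \<ge> xt$i" using half[OF S, of j i v] False e by auto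
      ultimately show ?thesis by blast
    qed
  qed
  have gen: "?P3" if H: "\<And>v i j t. i \<noteq> j \<Longrightarrow> v$i > v$j \<Longrightarrow>
      \<exists>t>0. \<exists>y\<in>argmax_lin X (v - t *\<^sub>R (axis i 1 - axis j 1)). y$i \<ge> y$j"
  proof (intro allI ballI)
    fix v x i j assume x: "x \<in> argmax_lin X v"
    show "(v$i - v$j) * (x$i - x$j) \<ge> 0"
    proof (rule lin_cases)
      fix i j assume "v$i > v$j"
      moreover then have "i \<noteq> j" by auto
      ultimately obtain t y where "t > 0" "y \<in> argmax_lin X (v - t *\<^sub>R (axis i 1 - axis j 1))" "y$i \<ge> y$j"
        using H by blast
      then show "x$i \<ge> x$j" using key_monot[OF x] by blast
    qed
  qed
  have S43: ?P3 if P4: ?P4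
  proof (rule gen)
    fix v :: "real^'n" and i j assume ij: "i \<noteq> j" "v$i > v$j"
    define t where "t = (v$i - v$j) / 2"
    have e: "(v - t *\<^sub>R (axis i 1 - axis j 1))$i = v$i - t" "(v - t *\<^sub>R (axis i 1 - axis j 1))$j = v$j + t"
      using shift_nth[OF ij(1)] by blast+
    have "(v - t *\<^sub>R (axis i 1 - axis j 1))$i = (v - t *\<^sub>R (axis i 1 - axis j 1))$j"
      unfolding e by (simp add: t_def field_simps)
    then show "\<exists>t>0. \<exists>y\<in>argmax_lin X (v - t *\<^sub>R (axis i 1 - axis j 1)). y$i \<ge> y$j"
      using P4 ij unfolding t_def by (intro exI[of _ t]) (auto simp: t_def)
  qed
  have S23: ?P3 if P2: ?P2
  proof (rule gen)
    fix v :: "real^'n" and i j assume ij: "i \<noteq> j" "v$i > v$j"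
    define t where "t = (v$i - v$j) / 4"
    define w where "w = v - t *\<^sub>R (axis i 1 - axis j 1)"
    have e: "w$i = v$i - t" "w$j = v$j + t"
      unfolding w_def using shift_nth[OF ij(1)] by blast+
    have gt: "w$i - w$j > 0"
      unfolding e using ij by (simp add: t_def field_simps)
    obtain y where y: "y \<in> argmax_lin X w" "(w$i - w$j) * (y$i - y$j) \<ge> 0" using P2 by blast
    then have "y$i \<ge> y$j" using gt by (simp add: zero_le_mult_iff)
    then show "\<exists>t>0. \<exists>y\<in>argmax_lin X (v - t *\<^sub>R (axis i 1 - axis j 1)). y$i \<ge> y$j"
      using y ij unfolding w_def by (intro exI[of _ t]) (auto simp: t_def)
  qed
  have S32: ?P2 if P3: ?P3
    using P3 argmax_nonempty[OF assms] by blast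
  have S3S: ?S if P3: ?P3 using P3_imp_SC[OF assms P3] .
  show ?thesis using S4 S43 S23 S32 S3S by blast
qed

end
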